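(* Let $q$ be a prime power, $m$ and $g$ positive integers, and let $p_1(x),\dots,p_g(x)\in\mathbb{F}_q[x]$ be polynomials of degree $m$ with $\gcd(p_i,p_j)=1$ for all $1\le i\ne j\le g$. For $1\le i\le g$ let $V_i=\{f(x)/p_i(x):\ f\in\mathbb{F}_q[x],\ \deg f\le m-1\}$. Let $Q(x)\in\mathbb{F}_q[x]$ be an irreducible polynomial coprime with every $p_i(x)$, and for a rational function $u\in V_i$ let $u(Q)$ denote the residue class of $u$ in $\mathbb{F}_q[x]/(Q(x))\cong\mathbb{F}_{q^{\deg Q}}$. Let $T\subseteq\{1,\dots,g\}$ with $|T|\le \deg(Q)/m$. If $g_i\in V_i$ ($i\in T$) satisfy $\sum_{i\in T} g_i(Q)=0$, then $g_i=0$ for all $i\in T$.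
   Context: The residue class $u(Q)$ of $u=f/p_i$ is well defined since $p_i$ is invertible modulo the irreducible polynomial $Q$ coprime to it. *)

theory Defs
  imports Complex_Main "HOL-Computational_Algebra.Polynomial_Factorial"
begin

text \<open>Residue class of the rational function f/p in F[x]/(Q), for p invertible mod Q:
  the unique reduced representative r (r mod Q = r) with r * p congruent to f modulo Q.\<close>
definition frac_res :: "'a::field poly \<Rightarrow> 'a poly \<Rightarrow> 'a poly \<Rightarrow> 'a poly" where
  "frac_res Q f p = (THE r. r mod Q = r \<and> Q dvd (r * p - f))"

end

theory Submission
  imports Defs
begin

lemma my_bezout:
  fixes a b :: "'a::euclidean_ring"
  assumes cop: "coprime a b"
  shows "\<exists>u v. u * a + v * b = 1"
proof -
  let ?P = "\<lambda>x. x \<noteq> 0 \<and> (\<exists>u v. x = u * a + v * b)"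
  have "a \<noteq> 0 \<or> b \<noteq> 0" using cop by auto
  then have "?P a \<or> ?P b" by (metis add.right_neutral add_0 mult_1 mult_zero_left)
  then have "\<exists>x. ?P x" by blast
  then obtain d where Pd: "?P d" and mn: "\<And>y. ?P y \<Longrightarrow> euclidean_size d \<le> euclidean_size y"
    using ex_has_least_nat[of ?P _ euclidean_size] by metis
  obtain u v where duv: "d = u * a + v * b" using Pd by blast
  have d0: "d \<noteq> 0" using Pd by blast
  have dv: "d dvd x" if x: "x = s * a + t * b" for x s t
  proof (rule ccontr)
    assume "\<not> d dvd x"
    then have nz: "x mod d \<noteq> 0" by (simp add: dvd_eq_mod_eq_0)
    have "x mod d = x - (x div d) * d" by (simp add: minus_div_mult_eq_mod)
    also have "\<dots> = (s - (x div d) * u) * a + (t - (x div d) * v) * b"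
      using x duv by (simp add: algebra_simps)
    finally have "?P (x mod d)" using nz by blast
    then have "euclidean_size d \<le> euclidean_size (x mod d)" by (rule mn)
    moreover have "euclidean_size (x mod d) < euclidean_size d" using d0 by (rule mod_size_less)
    ultimately show False by simp
  qed
  have "d dvd a" using dv[of a 1 0] by simp
  moreover have "d dvd b" using dv[of b 0 1] by simp
  ultimately have "is_unit d" using cop by (simp add: coprime_common_divisor)
  then obtain e where "1 = d * e" by (auto elim: dvdE)
  then have "(e * u) * a + (e * v) * b = 1" using duv by (simp add: algebra_simps)
  then show ?thesis by blast
qed

lemma dvd_helper:
  fixes A F X Q :: "'a::comm_ring_1"
  assumes "A - F = X" "Q dvd A" "Q dvd X"
  shows "Q dvd F"
proof -
  have "F = A - X" using assms(1) by (simp add: algebra_simps)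
  then show ?thesis using assms(2,3) by (simp add: dvd_diff)
qed

lemma my_coprime_dvd:
  fixes a b c :: "'a::euclidean_ring"
  assumes "coprime a c" "a dvd b * c"
  shows "a dvd b"
proof -
  obtain u v where uv: "u * a + v * c = 1" using my_bezout[OF assms(1)] by blast
  have "b = (b * u) * a + v * (b * c)" using uv
    by (metis (no_types, lifting) distrib_left mult.assoc mult.commute mult.left_commute mult_1_right)
  moreover have "a dvd (b * u) * a + v * (b * c)"
    using assms(2) by (intro dvd_add) auto
  ultimately show ?thesis by simp
qed

lemma my_bezout_coprime:
  fixes a b :: "'a::euclidean_ring"
  assumes "u * a + v * b = 1"
  shows "coprime a b"
proof (rule coprimeI)
  fix d assume "d dvd a" "d dvd b"
  then have "d dvd u * a + v * b" by (intro dvd_add) auto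
  then show "is_unit d" using assms by simp
qed

lemma my_coprime_mult:
  fixes a b c :: "'a::euclidean_ring"
  assumes "coprime a b" "coprime a c"
  shows "coprime a (b * c)"
proof -
  obtain u v where uv: "u * a + v * b = 1" using my_bezout[OF assms(1)] by blast
  obtain u' v' where uv': "u' * a + v' * c = 1" using my_bezout[OF assms(2)] by blast
  have "(u * a + v * b) * (u' * a + v' * c) = 1" using uv uv' by simp
  then have "(u * u' * a + u * v' * c + v * b * u') * a + (v * v') * (b * c) = 1"
    by (simp add: algebra_simps)
  then show ?thesis by (rule my_bezout_coprime)
qed

lemma my_prod_coprime:
  fixes a :: "'b::euclidean_ring" and h :: "'c \<Rightarrow> 'b"
  assumes "finite A" "\<forall>i\<in>A. coprime a (h i)"
  shows "coprime a (\<Prod>i\<in>A. h i)"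
  using assms
proof (induction A rule: finite_induct)
  case empty
  then show ?case by simp
next
  case (insert x F)
  then show ?case by (simp add: my_coprime_mult)
qed

lemma frac_res_dvd:
  fixes Q f p :: "'a::field poly"
  assumes "irreducible Q" "coprime Q p"
  shows "Q dvd (frac_res Q f p * p - f)"
proof -
  have Q0: "Q \<noteq> 0" using assms(1) by auto
  obtain u v where uv: "u * p + v * Q = 1"
    using my_bezout[of p Q] assms(2) by (auto simp: coprime_commute)
  define r where "r = (f * u) mod Q"
  have ex: "r mod Q = r \<and> Q dvd (r * p - f)"
  proof
    show "r mod Q = r" unfolding r_def by simp
    have "Q dvd (f*u - r)" unfolding r_def
      by (simp add: minus_mod_eq_mult_div)
    then have "Q dvd (f*u - r) * p" by simp
    moreover have "Q dvd f * (v * Q)" by simp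
    ultimately have "Q dvd - ((f*u - r) * p) - f * (v*Q)"
      by (simp add: dvd_diff)
    moreover have "r * p - f = - ((f*u - r) * p) - f * (v*Q)"
    proof -
      have "r * p - f = r * p - f * (u*p + v*Q)" using uv by simp
      also have "\<dots> = - ((f*u - r) * p) - f * (v*Q)" by (simp add: algebra_simps)
      finally show ?thesis .
    qed
    ultimately show "Q dvd (r * p - f)" by simp
  qed
  have dQ: "degree Q \<noteq> 0"
  proof
    assume "degree Q = 0"
    then have "is_unit Q" using Q0 by (simp add: is_unit_iff_degree)
    then show False using assms(1) by (simp add: irreducible_not_unit)
  qed
  have small: "degree x < degree Q" if "x mod Q = x" for x
  proof -
    have "x mod Q = 0 \<or> degree (x mod Q) < degree Q" using degree_mod_less[OF Q0] .
    then show ?thesis using that dQ by (cases "x = 0") auto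
  qed
  have uniq: "r' = r" if h: "r' mod Q = r' \<and> Q dvd (r' * p - f)" for r'
  proof -
    have "Q dvd (r' * p - f) - (r * p - f)" using dvd_diff[OF conjunct2[OF h] conjunct2[OF ex]] .
    moreover have "(r' * p - f) - (r * p - f) = (r' - r) * p" by (simp add: algebra_simps)
    ultimately have "Q dvd (r' - r) * p" by simp
    then have d: "Q dvd (r' - r)" using my_coprime_dvd[OF assms(2)] by blast
    have "degree r' < degree Q" using small conjunct1[OF h] .
    moreover have "degree r < degree Q" using small conjunct1[OF ex] .
    ultimately have "degree (r' - r) < degree Q"
      using degree_diff_le_max[of r' r] by linarith
    then have "r' - r = 0" using d dvd_imp_degree_le[of Q "r' - r"] by linarith
    then show ?thesis by simp
  qed
  have "frac_res Q f p = r" unfolding frac_res_def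
    using ex uniq by (rule the_equality)
  then show ?thesis using ex by simp
qed

theorem lemma3p1:
  fixes p f :: "nat \<Rightarrow> 'a::{finite,field} poly" and Q :: "'a poly"
    and m g :: nat and T :: "nat set"
  assumes "m > 0" and "g > 0"
    and "\<forall>i\<in>{1..g}. degree (p i) = m"
    and "\<forall>i\<in>{1..g}. \<forall>j\<in>{1..g}. i \<noteq> j \<longrightarrow> coprime (p i) (p j)"
    and "irreducible Q"
    and "\<forall>i\<in>{1..g}. coprime Q (p i)"
    and "T \<subseteq> {1..g}"
    and "real (card T) \<le> real (degree Q) / real m"
    and "\<forall>i\<in>T. degree (f i) \<le> m - 1"
    and "(\<Sum>i\<in>T. frac_res Q (f i) (p i)) mod Q = 0"
  shows "\<forall>i\<in>T. f i = 0"
proof -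
  have finT: "finite T" using assms(7) finite_subset by blast
  have Q0: "Q \<noteq> 0" and Qu: "\<not> is_unit Q" using assms(5) by (auto simp: irreducible_not_unit)
  have dQ: "degree Q \<ge> 1"
  proof (rule ccontr)
    assume "\<not> degree Q \<ge> 1"
    then have "degree Q = 0" by simp
    then have "is_unit Q" using Q0 by (simp add: is_unit_iff_degree)
    then show False using Qu by simp
  qed
  have mT: "m * card T \<le> degree Q"
  proof -
    have "real (card T) * real m \<le> real (degree Q)"
      using assms(8) assms(1) by (simp add: field_simps)
    then have "real (m * card T) \<le> real (degree Q)" by (simp add: mult.commute)
    then show ?thesis by linarith
  qed
  define r where "r i = frac_res Q (f i) (p i)" for i
  define P where "P i = (\<Prod>j\<in>T-{i}. p j)" for i
  define F where "F = (\<Sum>i\<in>T. f i * P i)"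
  have rd: "Q dvd (r i * p i - f i)" if "i \<in> T" for i
    unfolding r_def using frac_res_dvd assms(5) assms(6) assms(7) that by blast
  have PP: "p i * P i = (\<Prod>j\<in>T. p j)" if "i \<in> T" for i
    unfolding P_def using finT that by (simp add: prod.remove)
  have E: "(\<Sum>i\<in>T. r i) * (\<Prod>j\<in>T. p j) - F = (\<Sum>i\<in>T. (r i * p i - f i) * P i)"
    unfolding F_def sum_distrib_right sum_subtractf[symmetric]
  proof (rule sum.cong)
    fix i assume iT: "i \<in> T"
    show "r i * (\<Prod>j\<in>T. p j) - f i * P i = (r i * p i - f i) * P i"
      unfolding PP[OF iT, symmetric] by (simp add: algebra_simps)
  qed simp
  have D1: "Q dvd (\<Sum>i\<in>T. (r i * p i - f i) * P i)"
    by (rule dvd_sum) (simp add: rd)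
  have D2: "Q dvd (\<Sum>i\<in>T. r i) * (\<Prod>j\<in>T. p j)"
    using assms(10) unfolding r_def by (simp add: mod_eq_0_iff_dvd)
  have QF: "Q dvd F" by (rule dvd_helper[OF E D2 D1])
  have degF: "degree F < degree Q"
  proof -
    have "degree (f i * P i) \<le> m * card T - 1" if iT: "i \<in> T" for i
    proof -
      have "degree (P i) \<le> (\<Sum>j\<in>T-{i}. (degree \<circ> p) j)"
        unfolding P_def by (rule degree_prod_sum_le) (use finT in simp)
      also have "\<dots> = (\<Sum>j\<in>T-{i}. m)"
      proof (rule sum.cong)
        fix j assume "j \<in> T - {i}"
        then have "j \<in> {1..g}" using assms(7) by blast
        then show "(degree \<circ> p) j = m" using assms(3) by simp
      qed simp
      also have "\<dots> = m * (card T - 1)" using finT iT by simp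
      finally have a1: "degree (P i) \<le> m * (card T - 1)" .
      have a2: "degree (f i) \<le> m - 1" using assms(9) iT by blast
      have "T \<noteq> {}" using iT by blast
      then have a3: "card T \<ge> 1" using finT by (simp add: Suc_le_eq card_gt_0_iff)
      have a4: "m * (card T - 1) = m * card T - m" by (simp add: diff_mult_distrib2)
      have a5: "m \<le> m * card T" using a3 by simp
      have "degree (f i * P i) \<le> degree (f i) + degree (P i)" by (rule degree_mult_le)
      then show ?thesis using a1 a2 a4 a5 assms(1) by linarith
    qed
    then have "degree F \<le> m * card T - 1"
      unfolding F_def by (intro degree_sum_le finT) blast
    then show ?thesis using mT dQ by linarith
  qed
  have F0: "F = 0"
  proof (rule ccontr)
    assume "F \<noteq> 0"
    then have "degree Q \<le> degree F" using QF dvd_imp_degree_le by blast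
    then show False using degF by simp
  qed
  show ?thesis
  proof
    fix j assume jT: "j \<in> T"
    have F_split: "F = f j * P j + (\<Sum>i\<in>T-{j}. f i * P i)"
      unfolding F_def using finT jT by (simp add: sum.remove)
    have "p j dvd (\<Sum>i\<in>T-{j}. f i * P i)"
    proof (rule dvd_sum)
      fix i assume "i \<in> T - {j}"
      then have "j \<in> T - {i}" using jT by auto
      then have "p j dvd P i" unfolding P_def using finT by (intro dvd_prodI) auto
      then show "p j dvd f i * P i" by simp
    qed
    then have "p j dvd f j * P j"
    proof -
      have "f j * P j = - (\<Sum>i\<in>T-{j}. f i * P i)" using F0 F_split
        by (simp add: eq_neg_iff_add_eq_0)
      then show ?thesis using \<open>p j dvd (\<Sum>i\<in>T-{j}. f i * P i)\<close> by simp
    qed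
    moreover have "coprime (p j) (P j)"
      unfolding P_def
    proof (rule my_prod_coprime)
      show "finite (T - {j})" using finT by simp
      show "\<forall>i\<in>T - {j}. coprime (p j) (p i)"
      proof
        fix i assume "i \<in> T - {j}"
        then have "i \<in> {1..g}" "j \<in> {1..g}" "j \<noteq> i" using assms(7) jT by auto
        then show "coprime (p j) (p i)" using assms(4) by blast
      qed
    qed
    ultimately have dj: "p j dvd f j" using my_coprime_dvd by blast
    show "f j = 0"
    proof (rule ccontr)
      assume "f j \<noteq> 0"
      then have "degree (p j) \<le> degree (f j)" using dj dvd_imp_degree_le by blast
      moreover have "degree (p j) = m" using assms(3) assms(7) jT by auto
      moreover have "degree (f j) \<le> m - 1" using assms(9) jT by auto
      ultimately show False using assms(1) by linarith
    qed
  qed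
qed

end
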